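(* Let $0<p<1$ and let $X_p$ be a $\mathbb{P}^1(\mathbb{R})$-valued random variable satisfying $X_p \sim \frac{1}{X_p}+\epsilon_p$ with $\epsilon_p\sim\mathrm{Bernoulli}(p)$ independent of $X_p$. Then \[ \mathbb{E}\big[\log(X_p)\mathbf{1}_{\{X_p<1\}}\big]=(p-1)\,\mathbb{E}\big[\log(X_p)\mathbf{1}_{\{X_p>1\}}\big], \] \[ \mathbb{E}\big[\log(X_p)\mathbf{1}_{\{X_p>1\}}\big]=\frac1p\,\mathbb{E}[\log X_p], \qquad \mathbb{E}\big[\log(X_p)\mathbf{1}_{\{X_p<1\}}\big]=\frac{p-1}{p}\,\mathbb{E}[\log X_p]. \]
   Context: $\mathbb{P}^1(\mathbb{R})$ is identified with $\mathbb{R}\cup\{\infty\}$ (with $1/0=\infty$, $1/\infty=0$). $\epsilon_p\sim\mathrm{Bernoulli}(p)$ means $\mathbb{P}(\epsilon_p=1)=p$, $\mathbb{P}(\epsilon_p=0)=1-p$. The law of such $X_p$ is unique, atomless, $X_p\in(0,\infty)$ a.s., and $0<\mathbb{E}[\log X_p]<\infty$. *)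

theory Defs
  imports "HOL-Probability.Probability"
begin

text \<open>The real projective line P^1(R) = R \<union> {\<infinity>} is modelled as real option,
  with None playing the role of the point at infinity.\<close>

type_synonym P1 = "real option"

definition P1_borel :: "P1 measure" where
  "P1_borel = sigma UNIV ({Some ` B | B. B \<in> sets borel} \<union> {{None}})"

fun P1_inv :: "P1 \<Rightarrow> P1" where
  "P1_inv None = Some 0"
| "P1_inv (Some x) = (if x = 0 then None else Some (1 / x))"

fun P1_add :: "P1 \<Rightarrow> real \<Rightarrow> P1" where
  "P1_add None e = None"
| "P1_add (Some x) e = Some (x + e)"

end

theory Submission
  imports Defs
begin

lemma space_P1[simp]: "space P1_borel = UNIV"
  unfolding P1_borel_def by (simp add: space_measure_of_conv)

lemma sets_P1: "sets P1_borel = sigma_sets UNIV ({Some ` B | B. B \<in> sets borel} \<union> {{None}})"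
  unfolding P1_borel_def by (subst sets_measure_of) auto

lemma P1_Some_sets: "B \<in> sets borel \<Longrightarrow> Some ` B \<in> sets P1_borel"
  unfolding sets_P1 by (rule sigma_sets.Basic) auto

lemma P1_None_sets: "{None} \<in> sets P1_borel"
  unfolding sets_P1 by (rule sigma_sets.Basic) auto

lemma P1_fun_meas:
  fixes f :: "real \<Rightarrow> real"
  assumes f: "f \<in> borel_measurable borel"
  shows "(\<lambda>z. case z of None \<Rightarrow> c | Some x \<Rightarrow> f x) \<in> borel_measurable P1_borel"
proof (rule measurableI)
  fix A :: "real set" assume A: "A \<in> sets borel"
  have fA: "f -` A \<in> sets borel"
    using measurable_sets[OF f A] by simp
  have eq: "(\<lambda>z. case z of None \<Rightarrow> c | Some x \<Rightarrow> f x) -` A \<inter> space P1_borel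
      = Some ` (f -` A) \<union> (if c \<in> A then {None} else {})"
    by (auto split: option.splits)
  have "Some ` (f -` A) \<union> (if c \<in> A then {None} else {}) \<in> sets P1_borel"
  proof (cases "c \<in> A")
    case True
    then show ?thesis using sets.Un[OF P1_Some_sets[OF fA] P1_None_sets] by simp
  next
    case False
    then show ?thesis using P1_Some_sets[OF fA] by simp
  qed
  then show "(\<lambda>z. case z of None \<Rightarrow> c | Some x \<Rightarrow> f x) -` A \<inter> space P1_borel \<in> sets P1_borel"
    unfolding eq .
qed auto

lemma meas_to_P1:
  assumes N: "{\<omega>\<in>space M. f \<omega> = None} \<in> sets M"
    and v: "(\<lambda>\<omega>. case f \<omega> of None \<Rightarrow> 0 | Some x \<Rightarrow> x) \<in> borel_measurable M"
  shows "f \<in> measurable M P1_borel"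
  unfolding P1_borel_def
proof (rule measurable_measure_of)
  fix A assume "A \<in> {Some ` B | B. B \<in> sets (borel::real measure)} \<union> {{None}}"
  then consider B where "A = Some ` B" "B \<in> sets (borel::real measure)" | "A = {None}" by blast
  then show "f -` A \<inter> space M \<in> sets M"
  proof cases
    case 1
    have "f -` A \<inter> space M = (space M - {\<omega>\<in>space M. f \<omega> = None}) \<inter>
        ((\<lambda>\<omega>. case f \<omega> of None \<Rightarrow> 0 | Some x \<Rightarrow> x) -` B \<inter> space M)"
      using 1 by (auto split: option.splits)
    then show ?thesis using N measurable_sets[OF v 1(2)] by auto
  next
    case 2
    then show ?thesis using N by (auto simp: vimage_def Int_def conj_commute)
  qed
qed auto

lemma P1_Y_None: "P1_add (P1_inv z) e = None \<longleftrightarrow> z = Some 0"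
  by (cases z) auto

lemma (in prob_space) indep_var_sets:
  "indep_var S X T Y \<longleftrightarrow> (random_variable S X \<and> random_variable T Y) \<and>
     indep_set {X -` A \<inter> space M | A. A \<in> sets S} {Y -` A \<inter> space M | A. A \<in> sets T}"
  unfolding indep_var_def indep_vars_def2 indep_set_def UNIV_bool
  by (intro arg_cong2[where f="(\<and>)"] arg_cong2[where f=indep_sets] ext)
     (auto split: bool.split)

theorem lemma3p2:
  fixes M :: "'a measure" and X :: "'a \<Rightarrow> P1" and eps :: "'a \<Rightarrow> real" and p :: real
  assumes "prob_space M"
    and "0 < p" and "p < 1"
    and X_rv: "X \<in> measurable M P1_borel"
    and eps_rv: "eps \<in> borel_measurable M"
    and eps_bern: "AE \<omega> in M. eps \<omega> \<in> {0, 1}"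
    and eps_p: "measure M {\<omega> \<in> space M. eps \<omega> = 1} = p"
    and indep: "\<forall>A\<in>sets P1_borel. \<forall>B\<in>sets (borel :: real measure).
       measure M {\<omega> \<in> space M. X \<omega> \<in> A \<and> eps \<omega> \<in> B}
         = measure M {\<omega> \<in> space M. X \<omega> \<in> A} * measure M {\<omega> \<in> space M. eps \<omega> \<in> B}"
    and fixpt: "distr M P1_borel X = distr M P1_borel (\<lambda>\<omega>. P1_add (P1_inv (X \<omega>)) (eps \<omega>))"
    and pos: "AE \<omega> in M. \<exists>x>0. X \<omega> = Some x"
    and integr: "integrable M (\<lambda>\<omega>. case X \<omega> of Some x \<Rightarrow> ln x | None \<Rightarrow> 0)"
  shows
    "(\<integral>\<omega>. (case X \<omega> of Some x \<Rightarrow> ln x * indicator {..<1} x | None \<Rightarrow> 0) \<partial>M)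
       = (p - 1) * (\<integral>\<omega>. (case X \<omega> of Some x \<Rightarrow> ln x * indicator {1<..} x | None \<Rightarrow> 0) \<partial>M)
     \<and> (\<integral>\<omega>. (case X \<omega> of Some x \<Rightarrow> ln x * indicator {1<..} x | None \<Rightarrow> 0) \<partial>M)
       = (1 / p) * (\<integral>\<omega>. (case X \<omega> of Some x \<Rightarrow> ln x | None \<Rightarrow> 0) \<partial>M)
     \<and> (\<integral>\<omega>. (case X \<omega> of Some x \<Rightarrow> ln x * indicator {..<1} x | None \<Rightarrow> 0) \<partial>M)
       = ((p - 1) / p) * (\<integral>\<omega>. (case X \<omega> of Some x \<Rightarrow> ln x | None \<Rightarrow> 0) \<partial>M)"
  proof -
  interpret prob_space M by fact
  define lnv :: "P1 \<Rightarrow> real" where "lnv = (\<lambda>z. case z of None \<Rightarrow> 0 | Some x \<Rightarrow> ln x)"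
  define gL :: "P1 \<Rightarrow> real" where "gL = (\<lambda>z. case z of None \<Rightarrow> 0 | Some x \<Rightarrow> ln x * indicator {..<1} x)"
  define gG :: "P1 \<Rightarrow> real" where "gG = (\<lambda>z. case z of None \<Rightarrow> 0 | Some x \<Rightarrow> ln x * indicator {1<..} x)"
  define val :: "P1 \<Rightarrow> real" where "val = (\<lambda>z. case z of None \<Rightarrow> 0 | Some x \<Rightarrow> x)"
  define Y where "Y = (\<lambda>\<omega>. P1_add (P1_inv (X \<omega>)) (eps \<omega>))"
  define e :: "real \<Rightarrow> real" where "e = (\<lambda>t. if t = 1 then 1 else 0)"
  have lnv_m: "lnv \<in> borel_measurable P1_borel" unfolding lnv_def by (rule P1_fun_meas) simp
  have gL_m: "gL \<in> borel_measurable P1_borel" unfolding gL_def by (rule P1_fun_meas) simp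
  have gG_m: "gG \<in> borel_measurable P1_borel" unfolding gG_def by (rule P1_fun_meas) simp
  have val_m: "val \<in> borel_measurable P1_borel" unfolding val_def by (rule P1_fun_meas) simp
  have e_m: "e \<in> borel_measurable borel" unfolding e_def by simp
  have valX_m: "(\<lambda>\<omega>. val (X \<omega>)) \<in> borel_measurable M"
    using measurable_comp[OF X_rv val_m] by (simp add: comp_def)
  have XN: "{\<omega>\<in>space M. X \<omega> = None} \<in> sets M"
    using measurable_sets[OF X_rv P1_None_sets] by (simp add: vimage_def Int_def conj_commute)
  have X0: "{\<omega>\<in>space M. X \<omega> = Some 0} \<in> sets M"
    using measurable_sets[OF X_rv P1_Some_sets[of "{0}"]] by (simp add: vimage_def Int_def conj_commute)
  have Y_m: "Y \<in> measurable M P1_borel"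
  proof (rule meas_to_P1)
    have "{\<omega>\<in>space M. Y \<omega> = None} = {\<omega>\<in>space M. X \<omega> = Some 0}"
      unfolding Y_def by (simp add: P1_Y_None)
    then show "{\<omega>\<in>space M. Y \<omega> = None} \<in> sets M" using X0 by simp
    have eq: "(\<lambda>\<omega>. case Y \<omega> of None \<Rightarrow> 0 | Some x \<Rightarrow> x) = (\<lambda>\<omega>. if X \<omega> = None then eps \<omega>
        else if val (X \<omega>) = 0 then 0 else 1 / val (X \<omega>) + eps \<omega>)"
      unfolding Y_def val_def by (auto split: option.splits)
    have "(\<lambda>\<omega>. if X \<omega> = None then eps \<omega>
        else if val (X \<omega>) = 0 then 0 else 1 / val (X \<omega>) + eps \<omega>) \<in> borel_measurable M"
    proof (rule measurable_If)
      have [measurable]: "(\<lambda>\<omega>. val (X \<omega>)) \<in> borel_measurable M" by (rule valX_m)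
      have [measurable]: "eps \<in> borel_measurable M" by (rule eps_rv)
      show "(\<lambda>\<omega>. if val (X \<omega>) = 0 then 0 else 1 / val (X \<omega>) + eps \<omega>) \<in> borel_measurable M"
        by measurable
    qed (use eps_rv XN in auto)
    then show "(\<lambda>\<omega>. case Y \<omega> of None \<Rightarrow> 0 | Some x \<Rightarrow> x) \<in> borel_measurable M"
      unfolding eq .
  qed
  have intE: "integrable M (\<lambda>\<omega>. lnv (X \<omega>))" using integr unfolding lnv_def
    by (simp add: option.case_eq_if)
  have intL: "integrable M (\<lambda>\<omega>. gL (X \<omega>))"
  proof (rule Bochner_Integration.integrable_bound[OF intE])
    show "(\<lambda>\<omega>. gL (X \<omega>)) \<in> borel_measurable M"
      using measurable_comp[OF X_rv gL_m] by (simp add: comp_def)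
    show "AE \<omega> in M. norm (gL (X \<omega>)) \<le> norm (lnv (X \<omega>))"
      unfolding gL_def lnv_def by (auto split: option.splits simp: indicator_def)
  qed
  have intG: "integrable M (\<lambda>\<omega>. gG (X \<omega>))"
  proof (rule Bochner_Integration.integrable_bound[OF intE])
    show "(\<lambda>\<omega>. gG (X \<omega>)) \<in> borel_measurable M"
      using measurable_comp[OF X_rv gG_m] by (simp add: comp_def)
    show "AE \<omega> in M. norm (gG (X \<omega>)) \<le> norm (lnv (X \<omega>))"
      unfolding gG_def lnv_def by (auto split: option.splits simp: indicator_def)
  qed
  have sum: "(\<integral>\<omega>. lnv (X \<omega>) \<partial>M) = (\<integral>\<omega>. gL (X \<omega>) \<partial>M) + (\<integral>\<omega>. gG (X \<omega>) \<partial>M)"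
  proof -
    have "\<And>\<omega>. lnv (X \<omega>) = gL (X \<omega>) + gG (X \<omega>)"
      unfolding gL_def gG_def lnv_def by (auto split: option.splits simp: indicator_def)
    then show ?thesis using intL intG by simp
  qed
  have step1: "(\<integral>\<omega>. gL (X \<omega>) \<partial>M) = (\<integral>\<omega>. gL (Y \<omega>) \<partial>M)"
  proof -
    have "(\<integral>\<omega>. gL (X \<omega>) \<partial>M) = integral\<^sup>L (distr M P1_borel X) gL"
      by (rule integral_distr[OF X_rv gL_m, symmetric])
    also have "\<dots> = integral\<^sup>L (distr M P1_borel Y) gL" using fixpt unfolding Y_def by simp
    also have "\<dots> = (\<integral>\<omega>. gL (Y \<omega>) \<partial>M)"
      by (rule integral_distr[OF Y_m gL_m])
    finally show ?thesis .
  qed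
  have step2: "(\<integral>\<omega>. gL (Y \<omega>) \<partial>M) = (\<integral>\<omega>. e (eps \<omega>) * gG (X \<omega>) - gG (X \<omega>) \<partial>M)"
  proof (rule integral_cong_AE)
    show "(\<lambda>\<omega>. gL (Y \<omega>)) \<in> borel_measurable M"
      using measurable_comp[OF Y_m gL_m] by (simp add: comp_def)
    show "(\<lambda>\<omega>. e (eps \<omega>) * gG (X \<omega>) - gG (X \<omega>)) \<in> borel_measurable M"
      using measurable_comp[OF X_rv gG_m] measurable_comp[OF eps_rv e_m] by (simp add: comp_def)
    show "AE \<omega> in M. gL (Y \<omega>) = e (eps \<omega>) * gG (X \<omega>) - gG (X \<omega>)"
      using pos eps_bern
    proof eventually_elim
      case (elim \<omega>)
      then obtain x where x: "x > 0" "X \<omega> = Some x" by auto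
      show ?case
      proof (cases "eps \<omega> = 1")
        case True
        have "1 < 1 / x + 1" using x by simp
        then show ?thesis using True x unfolding Y_def gL_def gG_def e_def
          by (simp add: indicator_def)
      next
        case False
        then have "eps \<omega> = 0" using elim by auto
        then show ?thesis using False x unfolding Y_def gL_def gG_def e_def
          by (auto simp: indicator_def ln_div field_simps)
      qed
    qed
  qed
  have indGe: "indep_var borel (gG \<circ> X) borel (e \<circ> eps)"
    unfolding indep_var_sets
  proof (intro conjI)
    show "random_variable borel (gG \<circ> X)" by (rule measurable_comp[OF X_rv gG_m])
    show "random_variable borel (e \<circ> eps)" by (rule measurable_comp[OF eps_rv e_m])
    show "indep_set {(gG \<circ> X) -` A \<inter> space M |A. A \<in> sets borel} {(e \<circ> eps) -` A \<inter> space M |A. A \<in> sets borel}"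
      unfolding indep_sets2_eq
    proof (intro conjI ballI)
      show "{(gG \<circ> X) -` A \<inter> space M |A. A \<in> sets borel} \<subseteq> events"
        using measurable_comp[OF X_rv gG_m] by (auto intro: measurable_sets)
      show "{(e \<circ> eps) -` A \<inter> space M |A. A \<in> sets borel} \<subseteq> events"
        using measurable_comp[OF eps_rv e_m] by (auto intro: measurable_sets)
      fix a b assume a: "a \<in> {(gG \<circ> X) -` A \<inter> space M |A. A \<in> sets borel}"
        and b: "b \<in> {(e \<circ> eps) -` A \<inter> space M |A. A \<in> sets borel}"
      then obtain A0 B0 where A0: "A0 \<in> sets borel" "a = (gG \<circ> X) -` A0 \<inter> space M"
        and B0: "B0 \<in> sets borel" "b = (e \<circ> eps) -` B0 \<inter> space M" by blast
      define A where "A = gG -` A0"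
      define B where "B = e -` B0"
      have A: "A \<in> sets P1_borel" using measurable_sets[OF gG_m A0(1)] unfolding A_def by simp
      have B: "B \<in> sets borel" using measurable_sets[OF e_m B0(1)] unfolding B_def by simp
      have "a \<inter> b = {\<omega> \<in> space M. X \<omega> \<in> A \<and> eps \<omega> \<in> B}" using A0 B0 unfolding A_def B_def by auto
      moreover have "a = {\<omega> \<in> space M. X \<omega> \<in> A}" "b = {\<omega> \<in> space M. eps \<omega> \<in> B}"
        using A0 B0 unfolding A_def B_def by auto
      ultimately show "prob (a \<inter> b) = prob a * prob b" using indep A B by simp
    qed
  qed
  have em: "(\<lambda>\<omega>. e (eps \<omega>)) \<in> borel_measurable M"
    using measurable_comp[OF eps_rv e_m] by (simp add: comp_def)
  have inte: "integrable M (\<lambda>\<omega>. e (eps \<omega>))"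
    by (rule integrable_const_bound[where B=1]) (simp_all add: e_def em[unfolded e_def])
  have S: "{\<omega>\<in>space M. eps \<omega> = 1} \<in> sets M"
    using measurable_sets[OF eps_rv, of "{1}"] by (simp add: vimage_def Int_def conj_commute)
  have Ee: "(\<integral>\<omega>. e (eps \<omega>) \<partial>M) = p"
  proof -
    have "(\<integral>\<omega>. e (eps \<omega>) \<partial>M) = (\<integral>\<omega>. indicator {\<omega>\<in>space M. eps \<omega> = 1} \<omega> \<partial>M)"
      by (rule Bochner_Integration.integral_cong) (auto simp: e_def indicator_def)
    also have "\<dots> = measure M {\<omega>\<in>space M. eps \<omega> = 1}"
      using S by (simp add: emeasure_eq_measure)
    finally show ?thesis using eps_p by simp
  qed
  have prodI: "(\<integral>\<omega>. gG (X \<omega>) * e (eps \<omega>) \<partial>M) = (\<integral>\<omega>. gG (X \<omega>) \<partial>M) * p"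
    using indep_var_lebesgue_integral[OF indGe] intG inte Ee by (simp add: comp_def)
  have intprod: "integrable M (\<lambda>\<omega>. gG (X \<omega>) * e (eps \<omega>))"
    using indep_var_integrable[OF indGe] intG inte by (simp add: comp_def)
  have Lrel: "(\<integral>\<omega>. gL (X \<omega>) \<partial>M) = (p - 1) * (\<integral>\<omega>. gG (X \<omega>) \<partial>M)"
    using step1 step2 prodI intprod intG by (simp add: mult.commute algebra_simps)
  define L where "L = (\<integral>\<omega>. gL (X \<omega>) \<partial>M)"
  define G where "G = (\<integral>\<omega>. gG (X \<omega>) \<partial>M)"
  define E where "E = (\<integral>\<omega>. lnv (X \<omega>) \<partial>M)"
  have r1: "L = (p - 1) * G" "E = L + G" using Lrel sum unfolding L_def G_def E_def by auto
  have EG: "E = p * G" using r1 by (simp add: algebra_simps)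
  have r2a: "G = 1 / p * E" using EG \<open>0 < p\<close> by simp
  have r2: "G = 1 / p * E" "L = (p - 1) / p * E" using r2a r1(1) by simp_all
  show ?thesis using r1 r2 unfolding L_def G_def E_def gL_def gG_def lnv_def
    by (simp add: option.case_eq_if)
qed

end
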